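(* For every integer $n\geq 2$, $$\sum_{k=1}^{n-1}\frac{B_{2k}\bar B_{2n-2k}}{(2k)(2n-2k)}=\frac1n\sum_{k=1}^{n}\frac{B_{2k}B_{2n-2k}}{2k}\binom{2n}{2k}\,\frac{1-2^{2k-1}}{2^{2n-1}}+\frac1n\,\frac{B_{2n}}{2^{2n}}H_{2n-1}.$$
   Context: $B_n$ denotes the Bernoulli numbers, defined by $\frac{x}{e^x-1}=\sum_{n\ge 0}B_n\frac{x^n}{n!}$ (so $B_0=1$). $\bar B_n:=\frac{1-2^{n-1}}{2^{n-1}}B_n$. $H_i=\sum_{j=1}^i \frac1j$ is the $i$-th harmonic number. *)

theory Defs
  imports Complex_Main
begin

text \<open>Bernoulli numbers with the convention x/(e^x-1) = sum B_n x^n/n!, so B_0 = 1, B_1 = -1/2.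
  Defined by the standard recurrence sum_{k=0}^{n} (n+1 choose k) B_k = 0 for n >= 1.\<close>
fun bernoulli :: "nat \<Rightarrow> real" where
  "bernoulli n = (if n = 0 then 1 else
     - (\<Sum>k<n. real ((n + 1) choose k) * (if k < n then bernoulli k else 0)) / real (n + 1))"

declare bernoulli.simps[simp del]

definition bernoulli_bar :: "nat \<Rightarrow> real" where
  "bernoulli_bar n = (1 - 2 ^ n / 2) / (2 ^ n / 2) * bernoulli n"

definition harm :: "nat \<Rightarrow> real" where
  "harm i = (\<Sum>j=1..i. 1 / real j)"

end

theory Submission
  imports Defs "HOL-Analysis.Henstock_Kurzweil_Integration" "HOL-Computational_Algebra.Polynomial"
begin


lemma bern0 [simp]: "bernoulli 0 = 1" by (simp add: bernoulli.simps)
lemma bern1 [simp]: "bernoulli 1 = -1/2" by (simp add: bernoulli.simps)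

lemma bern_rec:
  assumes "n \<ge> 1"
  shows "(\<Sum>k\<le>n. real (Suc n choose k) * bernoulli k) = 0"
proof -
  have e: "(\<Sum>k<n. real ((n + 1) choose k) * (if k < n then bernoulli k else 0))
        = (\<Sum>k<n. real ((n + 1) choose k) * bernoulli k)"
    by (rule sum.cong) auto
  have "bernoulli n = - (\<Sum>k<n. real ((n + 1) choose k) * bernoulli k) / real (n + 1)"
    using assms by (subst bernoulli.simps) (simp only: e, simp)
  then have "real (n+1) * bernoulli n + (\<Sum>k<n. real ((n + 1) choose k) * bernoulli k) = 0"
    by (simp add: field_simps)
  moreover have "(\<Sum>k\<le>n. real (Suc n choose k) * bernoulli k)
     = (\<Sum>k<n. real ((n + 1) choose k) * bernoulli k) + real (Suc n choose n) * bernoulli n"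
    by (simp add: lessThan_Suc_atMost[symmetric])
  ultimately show ?thesis by simp
qed

definition asum :: "(nat \<Rightarrow> real) \<Rightarrow> nat \<Rightarrow> real \<Rightarrow> real" where
  "asum a k y = (\<Sum>j\<le>k. real (k choose j) * a j * y^(k-j))"

lemma asum_0 [simp]: "asum a 0 y = a 0" by (simp add: asum_def)

lemma asum_at0: "asum a k 0 = a k"
proof -
  have "asum a k 0 = (\<Sum>j\<in>{k}. real (k choose j) * a j * 0^(k-j))"
    unfolding asum_def by (rule sum.mono_neutral_right) auto
  then show ?thesis by simp
qed

lemma asum_deriv: "((asum a k) has_real_derivative (real k * asum a (k-1) y)) (at y)"
proof -
  have d: "((asum a k) has_real_derivative
      (\<Sum>j\<le>k. real (k choose j) * a j * (real (k-j) * y^(k-j-Suc 0)))) (at y)"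
    unfolding asum_def
    by (rule DERIV_sum, rule DERIV_cmult, rule DERIV_pow)
  have "(\<Sum>j\<le>k. real (k choose j) * a j * (real (k-j) * y^(k-j-Suc 0))) = real k * asum a (k-1) y"
  proof (cases k)
    case 0 then show ?thesis by simp
  next
    case (Suc m)
    have "(\<Sum>j\<le>k. real (k choose j) * a j * (real (k-j) * y^(k-j-Suc 0)))
        = (\<Sum>j\<le>m. real (k choose j) * a j * (real (k-j) * y^(k-j-Suc 0)))"
      using Suc by simp
    also have "\<dots> = (\<Sum>j\<le>m. real k * (real (m choose j) * a j * y^(m-j)))"
    proof (rule sum.cong)
      fix j assume "j \<in> {..m}"
      then have j: "j \<le> m" by simp
      have h: "real (k-j) * real (k choose j) = real k * real (m choose j)"
        using binomial_absorb_comp[of k j] Suc by (metis diff_Suc_1 of_nat_mult)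
      have ex: "k - j - Suc 0 = m - j" using Suc j by simp
      have "real (k choose j) * a j * (real (k-j) * y^(k-j-Suc 0))
          = (real (k-j) * real (k choose j)) * (a j * y^(m-j))"
        unfolding ex by (simp only: mult_ac)
      also have "\<dots> = real k * (real (m choose j) * a j * y^(m-j))"
        unfolding h by (simp only: mult_ac)
      finally show "real (k choose j) * a j * (real (k-j) * y^(k-j-Suc 0)) = real k * (real (m choose j) * a j * y^(m-j))" .
    qed simp
    also have "\<dots> = real k * asum a (k-1) y"
      using Suc by (simp add: asum_def sum_distrib_left)
    finally show ?thesis .
  qed
  with d show ?thesis by simp
qed

definition bp :: "nat \<Rightarrow> real \<Rightarrow> real" where
  "bp k x = asum bernoulli k x"

lemma bp_deriv: "((bp k) has_real_derivative (real k * bp (k-1) x)) (at x)"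
  unfolding bp_def[abs_def] using asum_deriv by simp

lemma bp_0 [simp]: "bp 0 x = 1" by (simp add: bp_def)
lemma bp_at0: "bp k 0 = bernoulli k" by (simp add: bp_def asum_at0)

lemma bp_at1: assumes "k \<noteq> 1" shows "bp k 1 = bernoulli k"
proof (cases "k = 0")
  case True then show ?thesis by simp
next
  case False
  then obtain n where k: "k = Suc n" and n: "n \<ge> 1" using assms by (cases k) auto
  have "bp k 1 = (\<Sum>j\<le>Suc n. real (Suc n choose j) * bernoulli j)"
    by (simp add: bp_def asum_def k)
  also have "\<dots> = (\<Sum>j\<le>n. real (Suc n choose j) * bernoulli j) + bernoulli (Suc n)"
    by simp
  also have "\<dots> = bernoulli k" using bern_rec[OF n] k by simp
  finally show ?thesis .
qed

lemma const_from_deriv0: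
  fixes g :: "real \<Rightarrow> real"
  assumes "\<And>x. (g has_real_derivative 0) (at x)"
  shows "g x = g y"
  using DERIV_isconst_all assms by blast

lemma bp_diff: "bp k (x+1) = bp k x + real k * x^(k-1)"
proof (induction k arbitrary: x)
  case 0 then show ?case by simp
next
  case (Suc k)
  define g where "g x = bp (Suc k) (x+1) - bp (Suc k) x - real (Suc k) * x^k" for x
  have "(g has_real_derivative 0) (at x)" for x
  proof -
    have "(g has_real_derivative (real (Suc k) * bp k (x+1) - real (Suc k) * bp k x - real (Suc k) * (real k * x^(k-1)))) (at x)"
      unfolding g_def
      by (auto intro!: derivative_eq_intros DERIV_chain2[OF bp_deriv] bp_deriv)
    moreover have "real (Suc k) * bp k (x+1) - real (Suc k) * bp k x - real (Suc k) * (real k * x^(k-1)) = 0"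
      using Suc.IH[of x] by (simp add: algebra_simps)
    ultimately show ?thesis by simp
  qed
  then have "g x = g 0" using const_from_deriv0 by blast
  moreover have "g 0 = 0"
  proof (cases "k = 0")
    case True then show ?thesis by (simp add: g_def bp_def asum_def)
  next
    case False then show ?thesis by (simp add: g_def bp_at1 bp_at0)
  qed
  ultimately show ?case by (simp add: g_def)
qed



lemma m1sq: "(-1::real)^n * (-1)^n = 1" by (induct n) auto

lemma bp_deriv_chain:
  "(g has_real_derivative g') (at x within s) \<Longrightarrow>
   ((\<lambda>x. bp k (g x)) has_real_derivative real k * bp (k-1) (g x) * g') (at x within s)"
  by (rule DERIV_chain2[OF bp_deriv])

lemma bp_deriv_lin:
  "((\<lambda>x. bp k (a * x + b)) has_real_derivative real k * bp (k-1) (a * x + b) * a) (at x)"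
proof -
  have "((\<lambda>x. a * x + b) has_real_derivative a * 1 + 0) (at x)"
    by (rule DERIV_add[OF DERIV_cmult[OF DERIV_ident] DERIV_const])
  then show ?thesis using bp_deriv_chain[of "\<lambda>x. a * x + b" a x UNIV k] by simp
qed

lemma bp_deriv_shift:
  "((\<lambda>x. bp k (x + b)) has_real_derivative real k * bp (k-1) (x + b)) (at x)"
  using bp_deriv_lin[of k 1 b x] by simp

lemma bp_add: "bp m (x + y) = asum (\<lambda>i. bp i x) m y"
proof (induction m arbitrary: y)
  case 0 then show ?case by simp
next
  case (Suc m)
  define g where "g y = bp (Suc m) (y + x) - asum (\<lambda>i. bp i x) (Suc m) y" for y
  have "(g has_real_derivative 0) (at y)" for y
  proof -
    have "(g has_real_derivative real (Suc m) * bp (Suc m - 1) (y + x) - real (Suc m) * asum (\<lambda>i. bp i x) (Suc m - 1) y) (at y)"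
      unfolding g_def by (intro DERIV_diff bp_deriv_shift asum_deriv)
    then show ?thesis using Suc.IH[of y] by (simp add: add.commute)
  qed
  then have "g y = g 0" using const_from_deriv0 by blast
  moreover have "g 0 = 0" by (simp add: g_def asum_at0)
  ultimately show ?case by (simp add: g_def add.commute)
qed

lemma ftc01:
  fixes F f :: "real \<Rightarrow> real"
  assumes "\<And>x. (F has_real_derivative f x) (at x)"
  shows "(f has_integral (F 1 - F 0)) {0..1}"
proof (rule fundamental_theorem_of_calculus)
  fix x :: real
  have "(F has_real_derivative f x) (at x within {0..1})"
    using assms by (rule has_field_derivative_at_within)
  then show "(F has_vector_derivative f x) (at x within {0..1})"
    by (simp only: has_real_derivative_iff_has_vector_derivative)
qed simp

lemma bp_int_shift: "((\<lambda>x. bp k (x + c)) has_integral c^k) {0..1}"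
proof -
  define F where "F x = bp (Suc k) (x + c) / real (Suc k)" for x
  have "(F has_real_derivative bp k (x + c)) (at x)" for x
  proof -
    have "(F has_real_derivative real (Suc k) * bp (Suc k - 1) (x + c) / real (Suc k)) (at x)"
      unfolding F_def by (intro DERIV_cdivide bp_deriv_shift)
    then show ?thesis by simp
  qed
  then have "((\<lambda>x. bp k (x + c)) has_integral (F 1 - F 0)) {0..1}" by (rule ftc01)
  moreover have "F 1 - F 0 = c^k"
  proof -
    have "bp (Suc k) (1 + c) - bp (Suc k) c = real (Suc k) * c^k"
      using bp_diff[of "Suc k" c] by (simp add: add.commute)
    then show ?thesis unfolding F_def by (simp add: diff_divide_distrib[symmetric])
  qed
  ultimately show ?thesis by simp
qed

lemma bp_int: "k \<ge> 1 \<Longrightarrow> (bp k has_integral 0) {0..1}"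
  using bp_int_shift[of k 0] by (cases k) auto

lemma appell_unique:
  assumes k: "k \<ge> 1"
    and d: "\<And>x. (f has_real_derivative real k * bp (k-1) x) (at x)"
    and i: "(f has_integral 0) {0..1}"
  shows "f x = bp k x"
proof -
  define g where "g x = f x - bp k x" for x
  have "(g has_real_derivative 0) (at x)" for x
  proof -
    have "(g has_real_derivative real k * bp (k-1) x - real k * bp (k-1) x) (at x)"
      unfolding g_def by (rule DERIV_diff[OF d bp_deriv])
    then show ?thesis by simp
  qed
  then have gc: "g x = g 0" for x using const_from_deriv0 by blast
  have "((\<lambda>x. bp k x + g 0) has_integral (0 + g 0)) {0..1}"
    by (rule has_integral_add[OF bp_int[OF k]]) (use has_integral_const_real[of "g 0" 0 1] in simp)
  moreover have "(\<lambda>x. bp k x + g 0) = f"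
  proof (rule ext)
    fix x show "bp k x + g 0 = f x" using gc[of x] unfolding g_def by simp
  qed
  ultimately have "(f has_integral (0 + g 0)) {0..1}" by simp
  then have "0 + g 0 = 0" using i by (rule has_integral_unique)
  then show ?thesis using gc[of x] by (simp add: g_def)
qed

lemma bp_reflect: "bp k (1 - x) = (-1)^k * bp k x"
proof (induction k arbitrary: x)
  case 0 then show ?case by simp
next
  case (Suc k)
  define f where "f x = (-1)^(Suc k) * bp (Suc k) (-1 * x + 1)" for x
  have "f x = bp (Suc k) x"
  proof (rule appell_unique)
    fix x
    have "(f has_real_derivative (-1)^(Suc k) * (real (Suc k) * bp (Suc k - 1) (-1 * x + 1) * (-1))) (at x)"
      unfolding f_def by (intro DERIV_cmult bp_deriv_lin)
    moreover have "(-1)^(Suc k) * (real (Suc k) * bp (Suc k - 1) (-1 * x + 1) * (-1)) = real (Suc k) * bp (Suc k - 1) x"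
    proof -
      have "(-1)^(Suc k) * (real (Suc k) * bp (Suc k - 1) (-1 * x + 1) * (-1)) = real (Suc k) * ((-1)^k * bp k (1 - x))"
        by simp
      also have "\<dots> = real (Suc k) * ((-1)^k * ((-1)^k * bp k x))" using Suc.IH[of x] by simp
      also have "\<dots> = real (Suc k) * bp k x" by (simp only: mult.assoc[symmetric] m1sq mult_1)
      finally show ?thesis by simp
    qed
    ultimately show "(f has_real_derivative real (Suc k) * bp (Suc k - 1) x) (at x)" by (rule DERIV_cong)
  next
    define F where "F x = (-1)^(Suc (Suc k)) * bp (Suc (Suc k)) (-1 * x + 1) / real (Suc (Suc k))" for x
    have "(F has_real_derivative f x) (at x)" for x
    proof -
      have "(F has_real_derivative (-1)^(Suc (Suc k)) * (real (Suc (Suc k)) * bp (Suc (Suc k) - 1) (-1 * x + 1) * (-1)) / real (Suc (Suc k))) (at x)"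
        unfolding F_def by (intro DERIV_cdivide DERIV_cmult bp_deriv_lin)
      moreover have "(-1)^(Suc (Suc k)) * (real (Suc (Suc k)) * bp (Suc (Suc k) - 1) (-1 * x + 1) * (-1)) / real (Suc (Suc k)) = f x"
        unfolding f_def by simp
      ultimately show ?thesis by (rule DERIV_cong)
    qed
    then have "(f has_integral (F 1 - F 0)) {0..1}" by (rule ftc01)
    moreover have "F 1 - F 0 = 0"
    proof -
      have "bp (Suc (Suc k)) (-1 * 1 + 1) = bp (Suc (Suc k)) (-1 * 0 + 1)"
        using bp_at0[of "Suc (Suc k)"] bp_at1[of "Suc (Suc k)"] by simp
      then show ?thesis unfolding F_def by simp
    qed
    ultimately show "(f has_integral 0) {0..1}" by simp
  qed simp
  then have "(-1)^(Suc k) * ((-1)^(Suc k) * bp (Suc k) (1 - x)) = (-1)^(Suc k) * bp (Suc k) x"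
    by (simp add: f_def)
  then show ?case by (simp only: mult.assoc[symmetric] m1sq mult_1)
qed

lemma bernoulli_odd:
  assumes "odd k" "k \<ge> 3" shows "bernoulli k = 0"
proof -
  have "bp k (1 - 0) = (-1)^k * bp k 0" by (rule bp_reflect)
  then have "bernoulli k = - bernoulli k"
    using assms bp_at1[of k] bp_at0[of k] by simp
  then show ?thesis by simp
qed



lemma bp_dup_lin: "2^k * (bp k ((1/2) * x + 0) + bp k ((1/2) * x + 1/2)) = 2 * bp k x"
proof (induction k arbitrary: x)
  case 0 then show ?case by simp
next
  case (Suc k)
  define f where "f x = 2^(Suc k) * (bp (Suc k) ((1/2) * x + 0) + bp (Suc k) ((1/2) * x + 1/2)) / 2" for x
  have "f x = bp (Suc k) x"
  proof (rule appell_unique)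
    fix x
    have "(f has_real_derivative 2^(Suc k) * (real (Suc k) * bp (Suc k - 1) ((1/2) * x + 0) * (1/2)
              + real (Suc k) * bp (Suc k - 1) ((1/2) * x + 1/2) * (1/2)) / 2) (at x)"
      unfolding f_def by (intro DERIV_cdivide DERIV_cmult DERIV_add bp_deriv_lin)
    moreover have "2^(Suc k) * (real (Suc k) * bp (Suc k - 1) ((1/2) * x + 0) * (1/2)
              + real (Suc k) * bp (Suc k - 1) ((1/2) * x + 1/2) * (1/2)) / 2
        = real (Suc k) * bp (Suc k - 1) x"
    proof -
      have "2^(Suc k) * (real (Suc k) * bp (Suc k - 1) ((1/2) * x + 0) * (1/2)
              + real (Suc k) * bp (Suc k - 1) ((1/2) * x + 1/2) * (1/2)) / 2
          = real (Suc k) * (2^k * (bp k ((1/2) * x + 0) + bp k ((1/2) * x + 1/2))) / 2"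
        by (simp add: algebra_simps)
      also have "\<dots> = real (Suc k) * bp k x" using Suc.IH[of x] by simp
      finally show ?thesis by simp
    qed
    ultimately show "(f has_real_derivative real (Suc k) * bp (Suc k - 1) x) (at x)" by (rule DERIV_cong)
  next
    define F where "F x = 2^(Suc k) * (bp (Suc (Suc k)) ((1/2) * x + 0) + bp (Suc (Suc k)) ((1/2) * x + 1/2)) / real (Suc (Suc k))" for x
    have "(F has_real_derivative f x) (at x)" for x
    proof -
      have "(F has_real_derivative 2^(Suc k) * (real (Suc (Suc k)) * bp (Suc (Suc k) - 1) ((1/2) * x + 0) * (1/2)
              + real (Suc (Suc k)) * bp (Suc (Suc k) - 1) ((1/2) * x + 1/2) * (1/2)) / real (Suc (Suc k))) (at x)"
        unfolding F_def by (intro DERIV_cdivide DERIV_cmult DERIV_add bp_deriv_lin)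
      moreover have "2^(Suc k) * (real (Suc (Suc k)) * bp (Suc (Suc k) - 1) ((1/2) * x + 0) * (1/2)
              + real (Suc (Suc k)) * bp (Suc (Suc k) - 1) ((1/2) * x + 1/2) * (1/2)) / real (Suc (Suc k)) = f x"
        unfolding f_def by (simp add: field_simps)
      ultimately show ?thesis by (rule DERIV_cong)
    qed
    then have "(f has_integral (F 1 - F 0)) {0..1}" by (rule ftc01)
    moreover have "F 1 - F 0 = 0"
    proof -
      have "bp (Suc (Suc k)) 1 = bp (Suc (Suc k)) 0"
        using bp_at0[of "Suc (Suc k)"] bp_at1[of "Suc (Suc k)"] by simp
      then show ?thesis unfolding F_def by (simp add: field_simps)
    qed
    ultimately show "(f has_integral 0) {0..1}" by simp
  qed simp
  then show ?case by (simp add: f_def)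
qed

lemma bp_half: "bp k (1/2) = (2 / 2^k - 1) * bernoulli k"
proof -
  have "2^k * (bp k ((1/2) * 0 + 0) + bp k ((1/2) * 0 + 1/2)) = 2 * bp k 0" by (rule bp_dup_lin)
  then have "2^k * (bernoulli k + bp k (1/2)) = 2 * bernoulli k" by (simp add: bp_at0)
  then have "bp k (1/2) = (2 * bernoulli k) / 2^k - bernoulli k"
    by (simp add: field_simps)
  then show ?thesis by (simp add: algebra_simps)
qed

lemma bbar_eq: "bernoulli_bar k = bp k (1/2)"
  unfolding bernoulli_bar_def bp_half by (simp add: field_simps)



definition pf :: "(real \<Rightarrow> real) \<Rightarrow> bool" where
  "pf f \<longleftrightarrow> (\<exists>p. \<forall>x. f x = poly p x)"

lemma pf_const: "pf (\<lambda>x. a)"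
  unfolding pf_def by (rule exI[of _ "[:a:]"]) simp

lemma pf_id: "pf (\<lambda>x. x)"
  unfolding pf_def by (rule exI[of _ "[:0,1:]"]) simp

lemma pf_add: "pf f \<Longrightarrow> pf g \<Longrightarrow> pf (\<lambda>x. f x + g x)"
  unfolding pf_def by (metis poly_add)

lemma pf_diff: "pf f \<Longrightarrow> pf g \<Longrightarrow> pf (\<lambda>x. f x - g x)"
  unfolding pf_def by (metis poly_diff)

lemma pf_mult: "pf f \<Longrightarrow> pf g \<Longrightarrow> pf (\<lambda>x. f x * g x)"
  unfolding pf_def by (metis poly_mult)

lemma pf_pow: "pf f \<Longrightarrow> pf (\<lambda>x. f x ^ n)"
  unfolding pf_def by (metis poly_power)

lemma pf_div: "pf f \<Longrightarrow> pf (\<lambda>x. f x / a)"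
proof -
  assume "pf f"
  then have "pf (\<lambda>x. f x * (1/a))" by (intro pf_mult pf_const)
  then show ?thesis by simp
qed

lemma pf_sum: "(\<And>i. i \<in> A \<Longrightarrow> pf (f i)) \<Longrightarrow> pf (\<lambda>x. \<Sum>i\<in>A. f i x)"
proof (induction A rule: infinite_finite_induct)
  case (infinite A) then show ?case by (simp add: pf_const)
next
  case empty then show ?case by (simp add: pf_const)
next
  case (insert a A)
  then show ?case by (simp add: pf_add)
qed

lemma pf_shift: "pf f \<Longrightarrow> pf (\<lambda>x. f (x + c))"
proof -
  assume "pf f"
  then obtain p where p: "\<And>x. f x = poly p x" unfolding pf_def by blast
  have "f (x + c) = poly (pcompose p [:c, 1:]) x" for x
    by (simp add: p poly_pcompose add.commute)
  then show ?thesis unfolding pf_def by blast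
qed

lemma pf_bp: "pf (bp k)"
proof -
  have "pf (\<lambda>x. \<Sum>j\<le>k. real (k choose j) * bernoulli j * x^(k-j))"
    by (intro pf_sum pf_mult pf_const pf_pow pf_id)
  then show ?thesis unfolding bp_def asum_def[abs_def] by simp
qed

lemma pf_bp_shift: "pf (\<lambda>x. bp k (x + c))"
  by (rule pf_shift[OF pf_bp])

lemma pf_periodic:
  assumes "pf f" and per: "\<And>x. f (x + 1) = f x"
  shows "f x = f 0"
proof -
  obtain p where p: "\<And>x. f x = poly p x" using assms(1) unfolding pf_def by blast
  define q where "q = p - [:f 0:]"
  have qn: "poly q (real n) = 0" for n
  proof -
    have "f (real n) = f 0"
    proof (induction n)
      case 0 then show ?case by simp
    next
      case (Suc n)
      have "f (real (Suc n)) = f (real n + 1)" by (simp add: add.commute)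
      also have "\<dots> = f (real n)" by (rule per)
      finally show ?case using Suc.IH by simp
    qed
    then show ?thesis by (simp add: q_def p[symmetric])
  qed
  have "q = 0"
  proof (rule ccontr)
    assume "q \<noteq> 0"
    then have "finite {x. poly q x = 0}" by (rule poly_roots_finite)
    moreover have "range real \<subseteq> {x. poly q x = 0}" using qn by auto
    ultimately have "finite (range real)" by (rule finite_subset[rotated])
    moreover have "infinite (range real)"
      using range_inj_infinite[of real] inj_of_nat by blast
    ultimately show False by simp
  qed
  then have "poly p x = f 0" by (simp add: q_def)
  then show ?thesis using p[of x] by simp
qed



lemma binom_frac:
  assumes "1 \<le> i"
  shows "real (Suc M choose i) / real i = real (M choose i) / real i + real (Suc M choose i) / real (Suc M)"
proof -
  obtain j where i: "i = Suc j" using assms by (cases i) auto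
  have e1: "real (Suc M choose Suc j) = real (M choose j) + real (M choose Suc j)" by simp
  have e2: "real (Suc M) * real (M choose j) = real (Suc M choose Suc j) * real (Suc j)"
    using Suc_times_binomial_eq[of M j] by (metis of_nat_mult)
  have "real (Suc M choose Suc j) / real (Suc j) - real (M choose Suc j) / real (Suc j)
      = real (M choose j) / real (Suc j)"
    using e1 by (simp add: diff_divide_distrib[symmetric])
  also have "\<dots> = real (Suc M choose Suc j) / real (Suc M)"
    using e2 by (simp add: field_simps)
  finally show ?thesis using i by simp
qed

lemma sum_0_split: "(\<Sum>i\<le>(n::nat). f i) = f 0 + (\<Sum>i=1..n. (f i :: real))"
proof -
  have "{..n} = insert 0 {1..n}" by auto
  then show ?thesis by simp
qed

lemma pascal_sum:
  "(\<Sum>i=1..Suc M. real (Suc M choose i) / real i * a i * z^(Suc M - i))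
   = z * (\<Sum>i=1..M. real (M choose i) / real i * a i * z^(M - i))
     + (asum a (Suc M) z - a 0 * z^(Suc M)) / real (Suc M)"
proof -
  have "(\<Sum>i=1..Suc M. real (Suc M choose i) / real i * a i * z^(Suc M - i))
      = (\<Sum>i=1..Suc M. real (M choose i) / real i * a i * z^(Suc M - i))
        + (\<Sum>i=1..Suc M. real (Suc M choose i) / real (Suc M) * a i * z^(Suc M - i))"
    by (simp add: binom_frac sum.distrib[symmetric] algebra_simps)
  also have "(\<Sum>i=1..Suc M. real (M choose i) / real i * a i * z^(Suc M - i))
      = z * (\<Sum>i=1..M. real (M choose i) / real i * a i * z^(M - i))"
  proof -
    have "(\<Sum>i=1..Suc M. real (M choose i) / real i * a i * z^(Suc M - i))
        = (\<Sum>i=1..M. real (M choose i) / real i * a i * z^(Suc M - i))"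
      by (simp add: sum.cl_ivl_Suc)
    also have "\<dots> = (\<Sum>i=1..M. z * (real (M choose i) / real i * a i * z^(M - i)))"
      by (rule sum.cong) (auto simp: Suc_diff_le)
    finally show ?thesis by (simp add: sum_distrib_left)
  qed
  also have "(\<Sum>i=1..Suc M. real (Suc M choose i) / real (Suc M) * a i * z^(Suc M - i))
      = (asum a (Suc M) z - a 0 * z^(Suc M)) / real (Suc M)"
  proof -
    have "asum a (Suc M) z = a 0 * z^(Suc M) + (\<Sum>i=1..Suc M. real (Suc M choose i) * a i * z^(Suc M - i))"
      unfolding asum_def by (subst sum_0_split) simp
    then show ?thesis by (simp add: sum_divide_distrib add_divide_distrib)
  qed
  finally show ?thesis .
qed

lemma harm_Suc': "harm (Suc n) = harm n + 1 / real (Suc n)"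
  unfolding harm_def by (simp add: sum.cl_ivl_Suc)

lemma harm_0' [simp]: "harm 0 = 0" unfolding harm_def by simp

lemma hock:
  "(\<Sum>m=1..M. x^(M-m) * bp m (x+c) / real m)
   = harm M * x^M + (\<Sum>i=1..M. real (M choose i) / real i * bp i c * x^(M-i))"
proof (induction M)
  case 0 then show ?case by simp
next
  case (Suc M)
  have "(\<Sum>m=1..Suc M. x^(Suc M-m) * bp m (x+c) / real m)
      = (\<Sum>m=1..M. x^(Suc M-m) * bp m (x+c) / real m) + bp (Suc M) (x+c) / real (Suc M)"
    by (simp add: sum.cl_ivl_Suc)
  also have "(\<Sum>m=1..M. x^(Suc M-m) * bp m (x+c) / real m) = x * (\<Sum>m=1..M. x^(M-m) * bp m (x+c) / real m)"
    unfolding sum_distrib_left by (rule sum.cong) (auto simp: Suc_diff_le)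
  also have "\<dots> = x * (harm M * x^M + (\<Sum>i=1..M. real (M choose i) / real i * bp i c * x^(M-i)))"
    using Suc.IH by simp
  finally have L: "(\<Sum>m=1..Suc M. x^(Suc M-m) * bp m (x+c) / real m)
      = x * (harm M * x^M + (\<Sum>i=1..M. real (M choose i) / real i * bp i c * x^(M-i))) + bp (Suc M) (x+c) / real (Suc M)" .
  have R: "(\<Sum>i=1..Suc M. real (Suc M choose i) / real i * bp i c * x^(Suc M-i))
      = x * (\<Sum>i=1..M. real (M choose i) / real i * bp i c * x^(M-i))
        + (bp (Suc M) (x + c) - x^(Suc M)) / real (Suc M)"
    using pascal_sum[of M "\<lambda>i. bp i c" x] bp_add[of "Suc M" c x] by (simp add: add.commute)
  show ?case
    unfolding L R harm_Suc' by (simp add: algebra_simps diff_divide_distrib)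
qed

lemma Qsum:
  "(\<Sum>i=1..M. real (M choose i) / real i * bp i (-c) * c^(M-i))
   = - harm M * c^M + (\<Sum>j=1..M. bernoulli j * c^(M-j) / real j)"
proof (induction M)
  case 0 then show ?case by simp
next
  case (Suc M)
  have R: "(\<Sum>i=1..Suc M. real (Suc M choose i) / real i * bp i (-c) * c^(Suc M-i))
      = c * (\<Sum>i=1..M. real (M choose i) / real i * bp i (-c) * c^(M-i))
        + (bernoulli (Suc M) - c^(Suc M)) / real (Suc M)"
    using pascal_sum[of M "\<lambda>i. bp i (-c)" c] bp_add[of "Suc M" "-c" c] by (simp add: bp_at0)
  have L: "(\<Sum>j=1..Suc M. bernoulli j * c^(Suc M-j) / real j)
      = c * (\<Sum>j=1..M. bernoulli j * c^(M-j) / real j) + bernoulli (Suc M) / real (Suc M)"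
  proof -
    have "(\<Sum>j=1..Suc M. bernoulli j * c^(Suc M-j) / real j)
        = (\<Sum>j=1..M. bernoulli j * c^(Suc M-j) / real j) + bernoulli (Suc M) / real (Suc M)"
      by (simp add: sum.cl_ivl_Suc)
    also have "(\<Sum>j=1..M. bernoulli j * c^(Suc M-j) / real j) = c * (\<Sum>j=1..M. bernoulli j * c^(M-j) / real j)"
      unfolding sum_distrib_left by (rule sum.cong) (auto simp: Suc_diff_le)
    finally show ?thesis .
  qed
  show ?case unfolding R L Suc.IH harm_Suc' by (simp add: algebra_simps diff_divide_distrib)
qed



definition SS :: "nat \<Rightarrow> real \<Rightarrow> real \<Rightarrow> real" where
  "SS N c x = (\<Sum>k=1..N-1. bp k x * bp (N-k) (x+c) / (real k * real (N-k)))"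
definition Phi :: "nat \<Rightarrow> real \<Rightarrow> real \<Rightarrow> real" where
  "Phi N c x = (harm (N-1) * bp N x + (\<Sum>i=1..N-1. real (N choose i) / real i * bp i c * bp (N-i) x)) / real N"
definition P3 :: "nat \<Rightarrow> real \<Rightarrow> real \<Rightarrow> real" where
  "P3 N c x = (bp N (x+c) - bp N x) / (real N * c)"
definition A1 :: "nat \<Rightarrow> real \<Rightarrow> real \<Rightarrow> real" where
  "A1 N c x = (\<Sum>m=1..N-1. x^(N-1-m) * bp m (x+c) / real m)"
definition A2 :: "nat \<Rightarrow> real \<Rightarrow> real \<Rightarrow> real" where
  "A2 N c x = (\<Sum>k=1..N-1. (x+c)^(N-1-k) * bp k x / real k)"
definition A3 :: "nat \<Rightarrow> real \<Rightarrow> real \<Rightarrow> real" where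
  "A3 N c x = (\<Sum>k=1..N-1. x^(k-1) * (x+c)^(N-1-k))"
definition DD :: "nat \<Rightarrow> real \<Rightarrow> real \<Rightarrow> real" where
  "DD N c x = SS N c x - Phi N c x - Phi N (-c) (x+c) - P3 N c x"

lemma delta_Phi:
  assumes "N \<ge> 1"
  shows "Phi N c (x+1) - Phi N c x = A1 N c x"
proof -
  obtain M where N: "N = Suc M" using assms by (cases N) auto
  have "Phi N c (x+1) - Phi N c x
      = (harm M * (bp N (x+1) - bp N x)
         + (\<Sum>i=1..M. real (N choose i) / real i * bp i c * (bp (N-i) (x+1) - bp (N-i) x))) / real N"
  proof -
    have "(\<Sum>i=1..M. real (N choose i) / real i * bp i c * (bp (N-i) (x+1) - bp (N-i) x))
        = (\<Sum>i=1..M. real (N choose i) / real i * bp i c * bp (N-i) (x+1))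
          - (\<Sum>i=1..M. real (N choose i) / real i * bp i c * bp (N-i) x)"
      by (simp add: sum_subtractf[symmetric] algebra_simps)
    then show ?thesis unfolding Phi_def N diff_Suc_1
      by (simp add: diff_divide_distrib[symmetric] algebra_simps)
  qed
  also have "\<dots> = (harm M * (real N * x^M)
         + (\<Sum>i=1..M. real N * (real (M choose i) / real i * bp i c * x^(M-i)))) / real N"
  proof -
    have "(\<Sum>i=1..M. real (N choose i) / real i * bp i c * (bp (N-i) (x+1) - bp (N-i) x))
        = (\<Sum>i=1..M. real N * (real (M choose i) / real i * bp i c * x^(M-i)))"
    proof (rule sum.cong)
      fix i assume "i \<in> {1..M}"
      then have i: "1 \<le> i" "i \<le> M" by auto
      have b: "real (N - i) * real (N choose i) = real N * real (M choose i)"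
        using binomial_absorb_comp[of N i] N by (metis diff_Suc_1 of_nat_mult)
      have "bp (N-i) (x+1) - bp (N-i) x = real (N-i) * x^(M-i)"
        using bp_diff[of "N-i" x] N i by simp
      then show "real (N choose i) / real i * bp i c * (bp (N-i) (x+1) - bp (N-i) x)
          = real N * (real (M choose i) / real i * bp i c * x^(M-i))"
        using b by (simp add: field_simps)
    qed simp
    moreover have "bp N (x+1) - bp N x = real N * x^M" using bp_diff[of N x] N by simp
    ultimately show ?thesis by simp
  qed
  also have "\<dots> = harm M * x^M + (\<Sum>i=1..M. real (M choose i) / real i * bp i c * x^(M-i))"
  proof -
    have e: "(\<Sum>i=1..M. real N * (real (M choose i) / real i * bp i c * x^(M-i)))
        = real N * (\<Sum>i=1..M. real (M choose i) / real i * bp i c * x^(M-i))"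
      by (simp add: sum_distrib_left)
    have aux: "(h * (n * a) + n * S) / n = h * a + S" if "n \<noteq> 0" for h n a S :: real
      using that by (simp add: field_simps)
    show ?thesis unfolding e by (rule aux) (use N in simp)
  qed
  also have "\<dots> = A1 N c x"
    unfolding A1_def N using hock[where M=M and x=x and c=c] by simp
  finally show ?thesis .
qed

lemma delta_SS:
  shows "SS N c (x+1) - SS N c x = A1 N c x + A2 N c x + A3 N c x"
proof -
  have "SS N c (x+1) - SS N c x
     = (\<Sum>k=1..N-1. x^(k-1) * bp (N-k) (x+c) / real (N-k)) + A2 N c x + A3 N c x"
  proof -
    have "SS N c (x+1) - SS N c x = (\<Sum>k=1..N-1. x^(k-1) * bp (N-k) (x+c) / real (N-k)
        + (x+c)^(N-1-k) * bp k x / real k + x^(k-1) * (x+c)^(N-1-k))"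
      unfolding SS_def sum_subtractf[symmetric]
    proof (rule sum.cong)
      fix k assume "k \<in> {1..N-1}"
      then have k: "1 \<le> k" "k \<le> N - 1" by auto
      define m where "m = N - k"
      have m: "1 \<le> m" "N - 1 - k = m - 1" using k by (auto simp: m_def)
      have e1: "bp k (x+1) = bp k x + real k * x^(k-1)" by (rule bp_diff)
      have e2: "bp m (x+1+c) = bp m (x+c) + real m * (x+c)^(m-1)"
        using bp_diff[of m "x+c"] by (simp add: algebra_simps)
      have kz: "real k \<noteq> 0" "real m \<noteq> 0" using k m by auto
      show "bp k (x+1) * bp (N-k) (x+1+c) / (real k * real (N-k)) - bp k x * bp (N-k) (x+c) / (real k * real (N-k))
          = x^(k-1) * bp (N-k) (x+c) / real (N-k) + (x+c)^(N-1-k) * bp k x / real k + x^(k-1) * (x+c)^(N-1-k)"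
        unfolding m_def[symmetric] m(2) e1 e2 using kz by (simp add: field_simps)
    qed simp
    then show ?thesis unfolding A2_def A3_def by (simp add: sum.distrib)
  qed
  also have "(\<Sum>k=1..N-1. x^(k-1) * bp (N-k) (x+c) / real (N-k)) = A1 N c x"
  proof -
    have "A1 N c x = (\<Sum>k=1..N-1. x^(N-1-(N-1+1-k)) * bp (N-1+1-k) (x+c) / real (N-1+1-k))"
      unfolding A1_def by (rule sum.atLeastAtMost_rev)
    also have "\<dots> = (\<Sum>k=1..N-1. x^(k-1) * bp (N-k) (x+c) / real (N-k))"
      by (rule sum.cong) auto
    finally show ?thesis by simp
  qed
  finally show ?thesis .
qed

lemma delta_Phi2:
  assumes "N \<ge> 1"
  shows "Phi N (-c) (x+1+c) - Phi N (-c) (x+c) = A2 N c x"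
proof -
  have "Phi N (-c) (x+1+c) - Phi N (-c) (x+c) = Phi N (-c) ((x+c)+1) - Phi N (-c) (x+c)"
    by (simp add: algebra_simps)
  also have "\<dots> = A1 N (-c) (x+c)" by (rule delta_Phi[OF assms])
  also have "\<dots> = A2 N c x" unfolding A1_def A2_def by simp
  finally show ?thesis .
qed

lemma delta_P3:
  assumes "N \<ge> 1" "c \<noteq> 0"
  shows "P3 N c (x+1) - P3 N c x = A3 N c x"
proof -
  obtain M where N: "N = Suc M" using assms by (cases N) auto
  have "P3 N c (x+1) - P3 N c x = ((x+c)^M - x^M) / c"
  proof -
    have e1: "bp N (x+1+c) - bp N (x+c) = real N * (x+c)^M"
      using bp_diff[of N "x+c"] N by (simp add: algebra_simps)
    have e2: "bp N (x+1) - bp N x = real N * x^M" using bp_diff[of N x] N by simp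
    have "P3 N c (x+1) - P3 N c x = ((bp N (x+1+c) - bp N (x+c)) - (bp N (x+1) - bp N x)) / (real N * c)"
      unfolding P3_def by (simp add: diff_divide_distrib[symmetric] algebra_simps)
    also have "\<dots> = (real N * ((x+c)^M - x^M)) / (real N * c)"
      unfolding e1 e2 by (simp add: right_diff_distrib)
    also have "\<dots> = ((x+c)^M - x^M) / c"
      using N by simp
    finally show ?thesis .
  qed
  also have "\<dots> = (\<Sum>i<M. x^(M - Suc i) * (x+c)^i)"
    using power_diff_sumr2[of "x+c" M x] assms by simp
  also have "\<dots> = A3 N c x"
    unfolding A3_def N
    by (rule sum.reindex_bij_witness[where i="\<lambda>b. M - b" and j="\<lambda>a. M - a"]) auto
  finally show ?thesis .
qed

lemma DD_periodic:
  assumes "N \<ge> 1" "c \<noteq> 0"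
  shows "DD N c (x+1) = DD N c x"
proof -
  have "DD N c (x+1) - DD N c x = (SS N c (x+1) - SS N c x) - (Phi N c (x+1) - Phi N c x)
      - (Phi N (-c) (x+1+c) - Phi N (-c) (x+c)) - (P3 N c (x+1) - P3 N c x)"
    unfolding DD_def by simp
  also have "\<dots> = 0"
    unfolding delta_SS delta_Phi[OF assms(1)] delta_Phi2[OF assms(1)] delta_P3[OF assms] by simp
  finally show ?thesis by simp
qed

lemma pf_DD: "pf (DD N c)"
proof -
  have "pf (\<lambda>x. SS N c x)" unfolding SS_def
    by (intro pf_sum pf_div pf_mult pf_bp pf_bp_shift)
  moreover have pP: "pf (\<lambda>x. Phi N d x)" for d unfolding Phi_def
    by (intro pf_sum pf_div pf_mult pf_bp pf_add pf_const)
  moreover have "pf (\<lambda>x. Phi N (-c) (x + c))" by (rule pf_shift[OF pP])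
  moreover have "pf (\<lambda>x. P3 N c x)" unfolding P3_def
    by (intro pf_div pf_diff pf_bp pf_bp_shift)
  ultimately show ?thesis unfolding DD_def[abs_def] by (intro pf_diff)
qed

lemma DD_const:
  assumes "N \<ge> 1" "c \<noteq> 0"
  shows "DD N c x = DD N c 0"
  by (rule pf_periodic[OF pf_DD DD_periodic[OF assms]])



definition Jf :: "nat \<Rightarrow> nat \<Rightarrow> real \<Rightarrow> real" where
  "Jf k m c = (\<Sum>j<m. (-1)^j * (fact k * fact m) / (fact (k+j+1) * fact (m-j-1)) * bernoulli (k+j+1) * c^(m-j-1))"

lemma Jf_Suc:
  "Jf k (Suc m) c = bernoulli (Suc k) * real (Suc m) * c^m / real (Suc k) - real (Suc m) / real (Suc k) * Jf (Suc k) m c"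
proof -
  have "Jf k (Suc m) c = (-1)^0 * (fact k * fact (Suc m)) / (fact (k+0+1) * fact (Suc m-0-1)) * bernoulli (k+0+1) * c^(Suc m-0-1)
     + (\<Sum>j<m. (-1)^(Suc j) * (fact k * fact (Suc m)) / (fact (k+Suc j+1) * fact (Suc m-Suc j-1)) * bernoulli (k+Suc j+1) * c^(Suc m-Suc j-1))"
    unfolding Jf_def by (rule sum.lessThan_Suc_shift)
  also have "(-1)^0 * (fact k * fact (Suc m)) / (fact (k+0+1) * fact (Suc m-0-1)) * bernoulli (k+0+1) * c^(Suc m-0-1)
      = bernoulli (Suc k) * real (Suc m) * c^m / real (Suc k)"
  proof -
    have aux: "(a * X) / (b * X) = a / b" if "X \<noteq> 0" for a b X :: real using that by simp
    have "(fact k * fact (Suc m)) / (fact (k+0+1) * fact (Suc m-0-1)) = (real (Suc m) * (fact k * fact m)) / (real (Suc k) * (fact k * fact m))"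
      by (simp add: algebra_simps)
    also have "\<dots> = real (Suc m) / real (Suc k)" by (rule aux) simp
    finally show ?thesis by simp
  qed
  also have "(\<Sum>j<m. (-1)^(Suc j) * (fact k * fact (Suc m)) / (fact (k+Suc j+1) * fact (Suc m-Suc j-1)) * bernoulli (k+Suc j+1) * c^(Suc m-Suc j-1))
      = - (real (Suc m) / real (Suc k) * Jf (Suc k) m c)"
    unfolding Jf_def sum_distrib_left sum_negf[symmetric]
  proof (rule sum.cong)
    fix j assume "j \<in> {..<m}"
    have e: "(fact k * fact (Suc m)) / (fact (k+Suc j+1) * fact (Suc m-Suc j-1))
        = real (Suc m) / real (Suc k) * ((fact (Suc k) * fact m) / (fact (Suc k+j+1) * fact (m-j-1)))"
    proof -
      have i1: "k + Suc j + 1 = Suc k + j + 1" by simp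
      have i2: "Suc m - Suc j - 1 = m - j - 1" by simp
      define D :: real where "D = fact (Suc k + j + 1) * fact (m-j-1)"
      have D0: "D \<noteq> 0" by (simp add: D_def)
      have fm: "fact (Suc m) = real (Suc m) * (fact m :: real)" by simp
      have fk: "fact (Suc k) = real (Suc k) * (fact k :: real)" by simp
      have aux: "a * (s * f) / D = s / b * (b * a * f / D)" if "b \<noteq> 0" "D \<noteq> 0" for a s f b D :: real
        using that by (simp add: field_simps)
      show ?thesis unfolding i1 i2 D_def[symmetric] fm fk by (rule aux) (simp_all add: D0)
    qed
    show "(-1)^(Suc j) * (fact k * fact (Suc m)) / (fact (k+Suc j+1) * fact (Suc m-Suc j-1)) * bernoulli (k+Suc j+1) * c^(Suc m-Suc j-1)
        = - (real (Suc m) / real (Suc k) * ((-1)^j * (fact (Suc k) * fact m) / (fact (Suc k+j+1) * fact (m-j-1)) * bernoulli (Suc k+j+1) * c^(m-j-1)))"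
    proof -
      have i1: "k + Suc j + 1 = Suc k + j + 1" by simp
      have i2: "Suc m - Suc j - 1 = m - j - 1" by simp
      have aux2: "(-1)^(Suc j) * X / Y * B * C = - (s * ((-1)^j * X' / Y' * B * C))"
        if h: "X / Y = s * (X' / Y')" for X Y s X' Y' B C :: real
      proof -
        have "(-1)^(Suc j) * X / Y * B * C = - ((-1)^j * (X / Y) * B * C)" by simp
        also have "\<dots> = - ((-1)^j * (s * (X' / Y')) * B * C)" unfolding h ..
        also have "\<dots> = - (s * ((-1)^j * X' / Y' * B * C))" by (simp add: algebra_simps)
        finally show ?thesis .
      qed
      show ?thesis using e unfolding i1 i2 by (rule aux2)
    qed
  qed simp
  finally show ?thesis by simp
qed

lemma J_integral:
  assumes "k \<ge> 1"
  shows "((\<lambda>x. bp k x * bp m (x+c)) has_integral Jf k m c) {0..1}"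
  using assms
proof (induction m arbitrary: k)
  case 0
  then show ?case using bp_int[of k] by (simp add: Jf_def)
next
  case (Suc m)
  define F where "F x = bp (Suc k) x * bp (Suc m) (x+c) / real (Suc k)" for x
  define F' where "F' x = bp k x * bp (Suc m) (x+c) + real (Suc m) / real (Suc k) * (bp (Suc k) x * bp m (x+c))" for x
  have "(F has_real_derivative F' x) (at x)" for x
  proof -
    have "(F has_real_derivative (real (Suc k) * bp (Suc k - 1) x * bp (Suc m) (x+c)
            + real (Suc m) * bp (Suc m - 1) (x+c) * bp (Suc k) x) / real (Suc k)) (at x)"
      unfolding F_def by (intro DERIV_cdivide DERIV_mult bp_deriv bp_deriv_shift)
    moreover have "(real (Suc k) * bp (Suc k - 1) x * bp (Suc m) (x+c)
            + real (Suc m) * bp (Suc m - 1) (x+c) * bp (Suc k) x) / real (Suc k) = F' x"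
      unfolding F'_def by (simp add: field_simps)
    ultimately show ?thesis by (rule DERIV_cong)
  qed
  then have i1: "(F' has_integral (F 1 - F 0)) {0..1}" by (rule ftc01)
  have i2: "((\<lambda>x. real (Suc m) / real (Suc k) * (bp (Suc k) x * bp m (x+c))) has_integral
      (real (Suc m) / real (Suc k) * Jf (Suc k) m c)) {0..1}"
    by (rule has_integral_mult_right) (rule Suc.IH, simp)
  have "((\<lambda>x. F' x - real (Suc m) / real (Suc k) * (bp (Suc k) x * bp m (x+c))) has_integral
      (F 1 - F 0 - real (Suc m) / real (Suc k) * Jf (Suc k) m c)) {0..1}"
    by (rule has_integral_diff[OF i1 i2])
  moreover have "(\<lambda>x. F' x - real (Suc m) / real (Suc k) * (bp (Suc k) x * bp m (x+c))) = (\<lambda>x. bp k x * bp (Suc m) (x+c))"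
    by (simp add: F'_def)
  moreover have "F 1 - F 0 = bernoulli (Suc k) * real (Suc m) * c^m / real (Suc k)"
  proof -
    have b1: "bp (Suc k) 1 = bernoulli (Suc k)" using Suc.prems by (intro bp_at1) simp
    have b2: "bp (Suc m) (1 + c) - bp (Suc m) c = real (Suc m) * c^m"
      using bp_diff[of "Suc m" c] by (simp add: add.commute)
    have "F 1 - F 0 = bernoulli (Suc k) * (bp (Suc m) (1 + c) - bp (Suc m) c) / real (Suc k)"
      unfolding F_def b1 bp_at0 by (simp add: diff_divide_distrib[symmetric] algebra_simps)
    then show ?thesis unfolding b2 by simp
  qed
  ultimately show ?case by (simp add: Jf_Suc)
qed



definition gS :: "nat \<Rightarrow> real \<Rightarrow> nat \<Rightarrow> nat \<Rightarrow> real" where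
  "gS N c k i = (-1)^(i-k-1) * (fact (k-1) * fact (N-k-1)) / (fact i * fact (N-i)) * bernoulli i * c^(N-i)"

lemma Jf_reindex:
  assumes "1 \<le> k" "k < N"
  shows "Jf k (N-k) c / (real k * real (N-k)) = (\<Sum>i=Suc k..N. gS N c k i)"
proof -
  define m where "m = N - k"
  have m: "1 \<le> m" "N = k + m" using assms by (auto simp: m_def)
  have fk: "fact k = real k * (fact (k-1) :: real)" using assms by (simp add: fact_reduce)
  have fm: "fact m = real m * (fact (m-1) :: real)" using m by (simp add: fact_reduce)
  have "Jf k m c / (real k * real m) = (\<Sum>j<m. (-1)^j * (fact k * fact m) / (fact (k+j+1) * fact (m-j-1)) * bernoulli (k+j+1) * c^(m-j-1) / (real k * real m))"
    unfolding Jf_def by (simp add: sum_divide_distrib)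
  also have "\<dots> = (\<Sum>j<m. gS N c k (k+j+1))"
  proof (rule sum.cong)
    fix j assume j: "j \<in> {..<m}"
    have i1: "k + j + 1 - k - 1 = j" by simp
    have i2: "N - (k + j + 1) = m - j - 1" using m j by auto
    have i3: "N - k - 1 = m - 1" using m by simp
    have aux: "s * (kk * a * (mm * b)) / D * B * C / (kk * mm) = s * (a * b) / D * B * C"
      if "kk \<noteq> 0" "mm \<noteq> 0" for s kk a mm b D B C :: real
      using that by (simp add: field_simps)
    show "(-1)^j * (fact k * fact m) / (fact (k+j+1) * fact (m-j-1)) * bernoulli (k+j+1) * c^(m-j-1) / (real k * real m)
        = gS N c k (k+j+1)"
      unfolding gS_def i1 i2 i3 fk fm m_def[symmetric]
      by (rule aux) (use assms m in auto)
  qed simp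
  also have "\<dots> = (\<Sum>i=Suc k..N. gS N c k i)"
    by (rule sum.reindex_bij_witness[where i="\<lambda>b. b - k - 1" and j="\<lambda>a. k + a + 1"]) (use m in auto)
  finally show ?thesis unfolding m_def .
qed

lemma tri_swap: "(\<Sum>k=1..n. \<Sum>i=Suc k..n. f k i) = (\<Sum>i=1..n. \<Sum>k=1..i-1. (f k i :: real))"
proof (induction n)
  case 0 then show ?case by simp
next
  case (Suc n)
  have "(\<Sum>k=1..Suc n. \<Sum>i=Suc k..Suc n. f k i) = (\<Sum>k=1..n. \<Sum>i=Suc k..Suc n. f k i)"
    by (simp add: sum.cl_ivl_Suc)
  also have "\<dots> = (\<Sum>k=1..n. (\<Sum>i=Suc k..n. f k i) + f k (Suc n))"
    by (rule sum.cong) (auto simp: sum.cl_ivl_Suc)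
  also have "\<dots> = (\<Sum>k=1..n. \<Sum>i=Suc k..n. f k i) + (\<Sum>k=1..n. f k (Suc n))"
    by (rule sum.distrib)
  also have "\<dots> = (\<Sum>i=1..n. \<Sum>k=1..i-1. f k i) + (\<Sum>k=1..n. f k (Suc n))"
    unfolding Suc.IH ..
  also have "\<dots> = (\<Sum>i=1..Suc n. \<Sum>k=1..i-1. f k i)"
    by (simp add: sum.cl_ivl_Suc)
  finally show ?case .
qed

lemma W_lemma:
  assumes "j < N"
  shows "real N * (\<Sum>k=1..j. (-1)^(j-k) * (fact (k-1) * fact (N-k-1)))
       = fact (N-1) * (-1)^(Suc j) + fact j * fact (N - Suc j)"
  using assms
proof (induction j)
  case 0 then show ?case by simp
next
  case (Suc j)
  obtain r where r: "N = r + j + 2" using Suc.prems by (metis add.commute add_Suc_right add_2_eq_Suc' less_iff_Suc_add)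
  have "(\<Sum>k=1..Suc j. (-1)^(Suc j-k) * (fact (k-1) * fact (N-k-1)) :: real)
      = (\<Sum>k=1..j. (-1)^(Suc j-k) * (fact (k-1) * fact (N-k-1)) :: real) + fact j * fact (N - Suc j - 1)"
    by (simp add: sum.cl_ivl_Suc)
  also have "(\<Sum>k=1..j. (-1)^(Suc j-k) * (fact (k-1) * fact (N-k-1)) :: real)
      = - (\<Sum>k=1..j. (-1)^(j-k) * (fact (k-1) * fact (N-k-1)) :: real)"
  proof -
    have "(\<Sum>k=1..j. (-1)^(Suc j-k) * (fact (k-1) * fact (N-k-1)) :: real)
        = (\<Sum>k=1..j. - ((-1)^(j-k) * (fact (k-1) * fact (N-k-1)) :: real))"
      by (rule sum.cong) (auto simp: Suc_diff_le algebra_simps)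
    then show ?thesis by (simp add: sum_negf)
  qed
  finally have e: "(\<Sum>k=1..Suc j. (-1)^(Suc j-k) * (fact (k-1) * fact (N-k-1)) :: real)
      = - (\<Sum>k=1..j. (-1)^(j-k) * (fact (k-1) * fact (N-k-1)) :: real) + fact j * fact (N - Suc j - 1)" .
  have IH: "real N * (\<Sum>k=1..j. (-1)^(j-k) * (fact (k-1) * fact (N-k-1)))
       = fact (N-1) * (-1)^(Suc j) + fact j * fact (N - Suc j)" using Suc by simp
  have f1: "N - Suc j = Suc r" "N - Suc j - 1 = r" "N - Suc (Suc j) = r" using r by auto
  have f2: "fact (Suc r) = real (Suc r) * (fact r :: real)" by simp
  have f3: "fact (Suc j) = real (Suc j) * (fact j :: real)" by simp
  have rN: "real N = real (Suc r) + real (Suc j)" using r by simp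
  have IH': "real N * (\<Sum>k=1..j. (-1)^(j-k) * (fact (k-1) * fact (N-k-1)))
       = fact (N-1) * (-1)^(Suc j) + fact j * (real (Suc r) * fact r)"
    using IH unfolding f1(1) f2 .
  have m: "(-1::real)^(Suc (Suc j)) = - ((-1)^(Suc j))" by simp
  have aux: "n * (- S + fj * fr) = F * (- s) + (jj1 * fj) * fr"
    if h1: "n * S = F * s + fj * (rr1 * fr)" and h2: "n = rr1 + jj1" for n S fj fr F s jj1 rr1 :: real
  proof -
    have "n * (- S + fj * fr) = - (n * S) + n * fj * fr" by (simp add: algebra_simps)
    also have "\<dots> = - (F * s + fj * (rr1 * fr)) + n * fj * fr" unfolding h1 ..
    also have "\<dots> = - (F * s + fj * (rr1 * fr)) + (rr1 + jj1) * fj * fr" unfolding h2 ..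
    also have "\<dots> = F * (- s) + (jj1 * fj) * fr" by (simp add: algebra_simps)
    finally show ?thesis .
  qed
  show ?case
    unfolding e m f1(2) f1(3) f3 by (rule aux[OF IH' rN])
qed

lemma inner_i:
  assumes "1 \<le> i" "i \<le> N"
  shows "(\<Sum>k=1..i-1. gS N c k i)
     = (-1)^i * real (N choose i) * bernoulli i * c^(N-i) / (real N)^2 + bernoulli i * c^(N-i) / (real N * real i)"
proof -
  obtain j where j: "i = Suc j" using assms by (cases i) auto
  have jN: "j < N" using assms j by simp
  define X where "X = bernoulli i * c^(N-i) / (fact i * fact (N-i))"
  have "(\<Sum>k=1..i-1. gS N c k i) = X * (\<Sum>k=1..j. (-1)^(j-k) * (fact (k-1) * fact (N-k-1)))"
    unfolding X_def sum_distrib_left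
    by (rule sum.cong) (auto simp: gS_def j)
  also have "\<dots> = X * (fact (N-1) * (-1)^(Suc j) + fact j * fact (N - Suc j)) / real N"
  proof -
    have aux: "S = R / n" if "n \<noteq> 0" "n * S = R" for n S R :: real
      using that by (simp add: field_simps)
    have "(\<Sum>k=1..j. (-1)^(j-k) * (fact (k-1) * fact (N-k-1))) = (fact (N-1) * (-1)^(Suc j) + fact j * fact (N - Suc j)) / real N"
      by (rule aux[OF _ W_lemma[OF jN]]) (use assms in simp)
    then show ?thesis by simp
  qed
  also have "\<dots> = (-1)^i * real (N choose i) * bernoulli i * c^(N-i) / (real N)^2 + bernoulli i * c^(N-i) / (real N * real i)"
  proof -
    have b: "real (N choose i) = fact N / (fact i * fact (N-i))" using assms by (simp add: binomial_fact)
    have fN: "fact N = real N * (fact (N-1) :: real)" using assms by (simp add: fact_reduce)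
    have fi: "fact i = real i * (fact j :: real)" using j by simp
    have Ni: "N - Suc j = N - i" using j by simp
    have aux: "(B * C / (ii * fj * F)) * (fN1 * s + fj * F) / n
        = s * (n * fN1 / (ii * fj * F)) * B * C / n^2 + B * C / (n * ii)"
      if "ii \<noteq> 0" "fj \<noteq> 0" "F \<noteq> 0" "n \<noteq> 0" for B C ii fj F fN1 s n :: real
      using that by (simp add: field_simps power2_eq_square)
    show ?thesis unfolding X_def b fN fi Ni j[symmetric]
      by (rule aux) (use assms in auto)
  qed
  finally show ?thesis .
qed

definition IS :: "nat \<Rightarrow> real \<Rightarrow> real" where
  "IS N c = (\<Sum>i=1..N. (-1)^i * real (N choose i) * bernoulli i * c^(N-i)) / (real N)^2
          + (\<Sum>i=1..N. bernoulli i * c^(N-i) / real i) / real N"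

lemma SS_integral:
  assumes "N \<ge> 1"
  shows "(SS N c has_integral IS N c) {0..1}"
proof -
  have "(SS N c has_integral (\<Sum>k=1..N-1. Jf k (N-k) c / (real k * real (N-k)))) {0..1}"
    unfolding SS_def[abs_def]
    by (intro has_integral_sum has_integral_divide J_integral) auto
  moreover have "(\<Sum>k=1..N-1. Jf k (N-k) c / (real k * real (N-k))) = IS N c"
  proof -
    have "(\<Sum>k=1..N-1. Jf k (N-k) c / (real k * real (N-k))) = (\<Sum>k=1..N-1. \<Sum>i=Suc k..N. gS N c k i)"
      by (rule sum.cong) (auto intro!: Jf_reindex)
    also have "\<dots> = (\<Sum>k=1..N. \<Sum>i=Suc k..N. gS N c k i)"
      using assms by (cases N) (auto simp: sum.cl_ivl_Suc)
    also have "\<dots> = (\<Sum>i=1..N. \<Sum>k=1..i-1. gS N c k i)" by (rule tri_swap)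
    also have "\<dots> = (\<Sum>i=1..N. (-1)^i * real (N choose i) * bernoulli i * c^(N-i) / (real N)^2
                     + bernoulli i * c^(N-i) / (real N * real i))"
    proof (rule sum.cong[OF refl])
      fix i assume "i \<in> {1..N}"
      then show "(\<Sum>k=1..i-1. gS N c k i) = (-1)^i * real (N choose i) * bernoulli i * c^(N-i) / (real N)^2
                     + bernoulli i * c^(N-i) / (real N * real i)"
        by (intro inner_i) auto
    qed
    also have "\<dots> = IS N c"
      unfolding IS_def sum.distrib by (simp add: sum_divide_distrib field_simps)
    finally show ?thesis .
  qed
  ultimately show ?thesis by simp
qed



lemma Phi_shift_integral:
  assumes "N \<ge> 1"
  shows "((\<lambda>x. Phi N d (x + e)) has_integral
     (harm (N-1) * e^N + (\<Sum>i=1..N-1. real (N choose i) / real i * bp i d * e^(N-i))) / real N) {0..1}"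
  unfolding Phi_def
  by (intro has_integral_divide has_integral_add has_integral_mult_right has_integral_sum bp_int_shift) auto

lemma Phi_integral:
  assumes "N \<ge> 1"
  shows "(Phi N d has_integral 0) {0..1}"
proof -
  have "((\<lambda>x. Phi N d (x + 0)) has_integral
     (harm (N-1) * 0^N + (\<Sum>i=1..N-1. real (N choose i) / real i * bp i d * 0^(N-i))) / real N) {0..1}"
    by (rule Phi_shift_integral[OF assms])
  moreover have "(harm (N-1) * 0^N + (\<Sum>i=1..N-1. real (N choose i) / real i * bp i d * (0::real)^(N-i))) / real N = 0"
  proof -
    have "(\<Sum>i=1..N-1. real (N choose i) / real i * bp i d * (0::real)^(N-i)) = 0"
      by (intro sum.neutral ballI) (auto simp: power_0_left)
    then show ?thesis using assms by (simp add: power_0_left)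
  qed
  ultimately show ?thesis by (simp only: add_0_right)
qed

lemma P3_integral:
  assumes "N \<ge> 1"
  shows "(P3 N c has_integral (c^N - 0) / (real N * c)) {0..1}"
  unfolding P3_def[abs_def]
  by (intro has_integral_divide has_integral_diff bp_int_shift bp_int assms)

lemma main_eq:
  assumes "N \<ge> 1" "c \<noteq> 0"
  shows "SS N c 0 - Phi N c 0 - Phi N (-c) c - P3 N c 0
       = IS N c - 0 - (harm (N-1) * c^N + (\<Sum>i=1..N-1. real (N choose i) / real i * bp i (-c) * c^(N-i))) / real N
         - (c^N - 0) / (real N * c)"
proof -
  have "((\<lambda>x. SS N c x - Phi N c x - Phi N (-c) (x + c) - P3 N c x) has_integral
      (IS N c - 0 - (harm (N-1) * c^N + (\<Sum>i=1..N-1. real (N choose i) / real i * bp i (-c) * c^(N-i))) / real N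
         - (c^N - 0) / (real N * c))) {0..1}"
    by (intro has_integral_diff SS_integral Phi_integral Phi_shift_integral P3_integral assms)
  then have i: "(DD N c has_integral
      (IS N c - 0 - (harm (N-1) * c^N + (\<Sum>i=1..N-1. real (N choose i) / real i * bp i (-c) * c^(N-i))) / real N
         - (c^N - 0) / (real N * c))) {0..1}"
    unfolding DD_def[abs_def] .
  have "DD N c = (\<lambda>x. DD N c 0)" using DD_const[OF assms] by auto
  then have "(DD N c has_integral DD N c 0) {0..1}"
    using has_integral_const_real[of "DD N c 0" 0 1] by simp
  then have "DD N c 0 = IS N c - 0 - (harm (N-1) * c^N + (\<Sum>i=1..N-1. real (N choose i) / real i * bp i (-c) * c^(N-i))) / real N
         - (c^N - 0) / (real N * c)"
    using i by (rule has_integral_unique)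
  then show ?thesis unfolding DD_def by simp
qed



lemma even_sum:
  fixes m :: nat
  assumes "\<And>k. k < m \<Longrightarrow> f (2*k+1) = (0::real)"
  shows "(\<Sum>k=1..m. f (2*k)) = (\<Sum>i=1..2*m. f i)"
  using assms
proof (induction m)
  case 0 then show ?case by simp
next
  case (Suc m)
  have "(\<Sum>k=1..Suc m. f (2*k)) = (\<Sum>k=1..m. f (2*k)) + f (2*m+2)"
    by (simp add: sum.cl_ivl_Suc)
  also have "(\<Sum>k=1..m. f (2*k)) = (\<Sum>i=1..2*m. f i)" using Suc by simp
  also have "(\<Sum>i=1..2*m. f i) + f (2*m+2) = (\<Sum>i=1..Suc (Suc (2*m)). f i)"
    using Suc.prems[of m] by (simp add: sum.cl_ivl_Suc)
  finally show ?case by simp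
qed

lemma negpow:
  assumes "even N" "i \<le> N"
  shows "(-c)^(N-i) = (-1)^i * (c::real)^(N-i)"
proof -
  have "even ((N - i) + i)" using assms by simp
  then have e: "even (N - i) \<longleftrightarrow> even i" by (simp only: even_add)
  show ?thesis
  proof (cases "even i")
    case True
    then have "even (N - i)" using e by simp
    then show ?thesis using True by simp
  next
    case False
    then have "odd (N - i)" using e by simp
    then show ?thesis using False by simp
  qed
qed

lemma final_combine:
  fixes SSv Phi0 Phi2v P3v ISv Fs H bN hN S1 S2 T E2 bpm c cN cN1 N :: real
  assumes N: "N \<noteq> 0" and c: "c = 1/2"
    and e_main: "SSv - Phi0 - Phi2v - P3v = ISv - 0 - (H * cN + Fs) / N - (cN - 0) / (N * c)"
    and ePhi0: "Phi0 = (H * bN + S1) / N"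
    and ePhi2: "Phi2v = (H * hN + (S2 - T)) / N"
    and eT: "T = -2 * (bN - cN - hN)"
    and eP3: "P3v = (hN - bN) / (N * c)"
    and eIS: "ISv = (bpm - cN) / N^2 + E2 / N"
    and eF: "Fs = - (H + 1/N) * cN + E2 - bpm / N"
    and ebpm: "bpm = hN + N * cN1"
    and ecN: "cN = c * cN1"
  shows "SSv = (S1 + S2 + H * (bN + hN)) / N + 2 * hN / N^2"
proof -
  have cN1: "cN1 = 2 * cN" using ecN c by simp
  have s1: "Phi0 + Phi2v + P3v = (S1 + S2 + H * (bN + hN)) / N - 2 * cN / N"
    unfolding ePhi0 ePhi2 eT eP3 c using N by (simp add: field_simps)
  have s2: "ISv - (H * cN + Fs) / N = 2 * bpm / N^2"
  proof -
    have "ISv - (H * cN + Fs) / N = (bpm - cN) / N^2 + E2 / N - (- cN / N + E2 - bpm / N) / N"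
      unfolding eIS eF by (simp add: algebra_simps)
    also have "\<dots> = 2 * bpm / N^2" using N by (simp add: field_simps power2_eq_square)
    finally show ?thesis .
  qed
  have s3: "2 * bpm / N^2 = 2 * hN / N^2 + 4 * cN / N"
    unfolding ebpm cN1 using N by (simp add: field_simps power2_eq_square)
  have s4: "cN / (N * c) = 2 * cN / N" unfolding c by simp
  have "SSv = (Phi0 + Phi2v + P3v) + (ISv - (H * cN + Fs) / N) - cN / (N * c)"
    using e_main by simp
  also have "\<dots> = (S1 + S2 + H * (bN + hN)) / N + 2 * hN / N^2"
    unfolding s1 s2 s3 s4 by (simp add: algebra_simps)
  finally show ?thesis .
qed

theorem theorem3p1:
  fixes n :: nat
  assumes "n \<ge> 2"
  shows "(\<Sum>k=1..n-1. bernoulli (2*k) * bernoulli_bar (2*n - 2*k) / (real (2*k) * real (2*n - 2*k)))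
       = (1 / real n) * (\<Sum>k=1..n. bernoulli (2*k) * bernoulli (2*n - 2*k) / real (2*k)
              * real ((2*n) choose (2*k)) * (1 - 2 powi (2*int k - 1)) / 2 ^ (2*n - 1))
         + (1 / real n) * (bernoulli (2*n) / 2 ^ (2*n)) * harm (2*n - 1)"
proof -
  define N where "N = 2*n"
  define c :: real where "c = 1/2"
  have N1: "N \<ge> 1" and evN: "even N" and N4: "N \<ge> 4" using assms by (auto simp: N_def)
  have c0: "c \<noteq> 0" by (simp add: c_def)
  have oddN1: "odd (N-1)" using evN N1 by simp
  have bN1: "bernoulli (N-1) = 0" by (rule bernoulli_odd) (use N4 oddN1 in auto)
  have hN1: "bp (N-1) c = 0" unfolding c_def bp_half bN1 by simp
  have bodd: "bernoulli i = 0" if odd: "odd i" and ne: "i \<noteq> 1" for i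
  proof (rule bernoulli_odd[OF odd])
    obtain j where j: "i = 2*j+1" using odd by (auto elim: oddE)
    then have "j \<noteq> 0" using ne by auto
    then show "i \<ge> 3" using j by simp
  qed
  define fL where "fL i = bernoulli i * bp (N-i) c / (real i * real (N-i))" for i
  have fL_odd: "fL i = 0" if "odd i" for i
  proof (cases "i = 1")
    case True then show ?thesis using hN1 by (simp add: fL_def)
  next
    case False then show ?thesis using bodd[OF that False] by (simp add: fL_def)
  qed
  have LHS: "(\<Sum>k=1..n-1. bernoulli (2*k) * bernoulli_bar (2*n - 2*k) / (real (2*k) * real (2*n - 2*k))) = SS N c 0"
  proof -
    have "(\<Sum>k=1..n-1. bernoulli (2*k) * bernoulli_bar (2*n - 2*k) / (real (2*k) * real (2*n - 2*k)))
        = (\<Sum>k=1..n-1. fL (2*k))"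
      by (rule sum.cong) (simp_all add: fL_def bbar_eq N_def c_def)
    also have "\<dots> = (\<Sum>i=1..2*(n-1). fL i)"
      by (rule even_sum) (simp add: fL_odd)
    also have "\<dots> = (\<Sum>i=1..N-1. fL i)"
    proof -
      have e: "N - 1 = Suc (2*(n-1))" using assms by (simp add: N_def)
      show ?thesis unfolding e using fL_odd[of "Suc (2*(n-1))"] by (simp add: sum.cl_ivl_Suc)
    qed
    also have "\<dots> = SS N c 0" unfolding SS_def fL_def by (simp add: bp_at0)
    finally show ?thesis .
  qed
  define g where "g i = bernoulli i * bernoulli (N-i) / real i * real (N choose i) * (1 - 2^(i-1)) / 2^(N-1)" for i
  have g_odd: "g i = 0" if "odd i" for i
  proof (cases "i = 1")
    case True then show ?thesis by (simp add: g_def)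
  next
    case False then show ?thesis using bodd[OF that False] by (simp add: g_def)
  qed
  have RHSsum: "(\<Sum>k=1..n. bernoulli (2*k) * bernoulli (2*n - 2*k) / real (2*k)
              * real ((2*n) choose (2*k)) * (1 - 2 powi (2*int k - 1)) / 2 ^ (2*n - 1)) = (\<Sum>i=1..N. g i)"
  proof -
    have "(\<Sum>k=1..n. bernoulli (2*k) * bernoulli (2*n - 2*k) / real (2*k)
              * real ((2*n) choose (2*k)) * (1 - 2 powi (2*int k - 1)) / 2 ^ (2*n - 1)) = (\<Sum>k=1..n. g (2*k))"
    proof (rule sum.cong[OF refl])
      fix k assume "k \<in> {1..n}"
      then have k: "k \<ge> 1" by simp
      have "(2::real) powi (2*int k - 1) = 2 powi (int (2*k-1))" using k by (simp add: of_nat_diff)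
      also have "\<dots> = 2^(2*k-1)" by (rule power_int_of_nat)
      finally show "bernoulli (2*k) * bernoulli (2*n - 2*k) / real (2*k)
              * real ((2*n) choose (2*k)) * (1 - 2 powi (2*int k - 1)) / 2 ^ (2*n - 1) = g (2*k)"
        by (simp add: g_def N_def)
    qed
    also have "\<dots> = (\<Sum>i=1..2*n. g i)" by (rule even_sum) (simp add: g_odd)
    finally show ?thesis by (simp add: N_def)
  qed
  define H where "H = harm (N-1)"
  define hN where "hN = bp N c"
  define bN where "bN = bernoulli N"
  define S1 where "S1 = (\<Sum>i=1..N-1. real (N choose i) / real i * bp i c * bernoulli (N-i))"
  define S2 where "S2 = (\<Sum>i=1..N-1. real (N choose i) / real i * bp i c * bp (N-i) c)"
  define T where "T = (\<Sum>i=1..N-1. real (N choose i) * (-c)^(i-1) * bp (N-i) c)"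
  define E2 where "E2 = (\<Sum>i=1..N. bernoulli i * c^(N-i) / real i)"
  define Fs where "Fs = (\<Sum>i=1..N-1. real (N choose i) / real i * bp i (-c) * c^(N-i))"
  define bpm where "bpm = bp N (-c)"
  have e_main: "SS N c 0 - Phi N c 0 - Phi N (-c) c - P3 N c 0
       = IS N c - 0 - (H * c^N + Fs) / real N - (c^N - 0) / (real N * c)"
    unfolding H_def Fs_def by (rule main_eq[OF N1 c0])
  have ePhi0: "Phi N c 0 = (H * bN + S1) / real N"
    unfolding Phi_def H_def bN_def S1_def by (simp add: bp_at0)
  have bpmc: "bp i (-c) = bp i c - real i * (-c)^(i-1)" for i
  proof -
    have cc: "-c + 1 = c" by (simp add: c_def)
    have "bp i c = bp i (-c) + real i * (-c)^(i-1)" using bp_diff[of i "-c"] unfolding cc .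
    then show ?thesis by linarith
  qed
  have ePhi2: "Phi N (-c) c = (H * hN + (S2 - T)) / real N"
  proof -
    have "(\<Sum>i=1..N-1. real (N choose i) / real i * bp i (-c) * bp (N-i) c) = S2 - T"
      unfolding S2_def T_def sum_subtractf[symmetric]
      by (rule sum.cong) (auto simp: bpmc algebra_simps)
    then show ?thesis unfolding Phi_def H_def hN_def by simp
  qed
  have eP3: "P3 N c 0 = (hN - bN) / (real N * c)"
    unfolding P3_def hN_def bN_def by (simp add: bp_at0)
  have split_ends: "(\<Sum>i\<le>N. f i) = f 0 + (\<Sum>i=1..N-1. f i) + f N" for f :: "nat \<Rightarrow> real"
  proof -
    have "(\<Sum>i\<le>N. f i) = f 0 + (\<Sum>i=1..N. f i)" by (rule sum_0_split)
    moreover have "(\<Sum>i=1..N. f i) = (\<Sum>i=1..N-1. f i) + f N"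
      using N1 by (cases N) (auto simp: sum.cl_ivl_Suc)
    ultimately show ?thesis by simp
  qed
  have cNeven: "(-c)^N = c^N" using evN by simp
  have eT: "T = -2 * (bN - c^N - hN)"
  proof -
    have "T = (\<Sum>i=1..N-1. real (N choose (N-1+1-i)) * (-c)^(N-1+1-i-1) * bp (N-(N-1+1-i)) c)"
      unfolding T_def by (rule sum.atLeastAtMost_rev)
    also have "\<dots> = (\<Sum>i=1..N-1. -2 * (real (N choose i) * bp i c * (-c)^(N-i)))"
    proof (rule sum.cong[OF refl])
      fix i assume "i \<in> {1..N-1}"
      then have i: "1 \<le> i" "i \<le> N-1" by auto
      have i1: "N-1+1-i = N - i" "N - (N - i) = i" using i N1 by auto
      have i2: "N - i - 1 = N - i - 1" ..
      obtain t where t: "N - i = Suc t" using i N1 by (metis Suc_diff_Suc diff_Suc_1 le_imp_less_Suc less_imp_Suc_add not_less_eq)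
      have pw: "(-c)^(N-i) = (-c) * (-c)^(N-i-1)" unfolding t by simp
      have "(-c)^(N-i-1) = -2 * (-c)^(N-i)"
      proof -
        have "-2 * (-c)^(N-i) = -2 * ((-c) * (-c)^(N-i-1))" by (simp only: pw)
        also have "\<dots> = (-c)^(N-i-1)" by (simp add: c_def)
        finally show ?thesis by simp
      qed
      then show "real (N choose (N-1+1-i)) * (-c)^(N-1+1-i-1) * bp (N-(N-1+1-i)) c
          = -2 * (real (N choose i) * bp i c * (-c)^(N-i))"
        unfolding i1 using i by (simp add: binomial_symmetric[symmetric] algebra_simps)
    qed
    also have "\<dots> = -2 * (\<Sum>i=1..N-1. real (N choose i) * bp i c * (-c)^(N-i))"
      by (simp add: sum_distrib_left)
    also have "(\<Sum>i=1..N-1. real (N choose i) * bp i c * (-c)^(N-i)) = bN - c^N - hN"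
    proof -
      have "bN = bp N (c + -c)" by (simp add: bN_def bp_at0)
      also have "\<dots> = asum (\<lambda>i. bp i c) N (-c)" by (rule bp_add)
      also have "\<dots> = c^N + (\<Sum>i=1..N-1. real (N choose i) * bp i c * (-c)^(N-i)) + hN"
        unfolding asum_def split_ends using cNeven by (simp add: hN_def)
      finally show ?thesis by simp
    qed
    finally show ?thesis by simp
  qed
  have eIS: "IS N c = (bpm - c^N) / (real N)^2 + E2 / real N"
  proof -
    have "bpm = asum bernoulli N (-c)" unfolding bpm_def bp_def ..
    also have "\<dots> = c^N + (\<Sum>i=1..N. (-1)^i * real (N choose i) * bernoulli i * c^(N-i))"
    proof -
      have "asum bernoulli N (-c) = (-c)^N + (\<Sum>i=1..N. real (N choose i) * bernoulli i * (-c)^(N-i))"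
        unfolding asum_def by (subst sum_0_split) simp
      also have "(\<Sum>i=1..N. real (N choose i) * bernoulli i * (-c)^(N-i))
          = (\<Sum>i=1..N. (-1)^i * real (N choose i) * bernoulli i * c^(N-i))"
        by (rule sum.cong) (auto simp: negpow[OF evN])
      finally show ?thesis using cNeven by simp
    qed
    finally have "(\<Sum>i=1..N. (-1)^i * real (N choose i) * bernoulli i * c^(N-i)) = bpm - c^N" by simp
    then show ?thesis unfolding IS_def E2_def by simp
  qed
  have eF: "Fs = - (H + 1 / real N) * c^N + E2 - bpm / real N"
  proof -
    have q: "(\<Sum>i=1..N. real (N choose i) / real i * bp i (-c) * c^(N-i)) = - harm N * c^N + E2"
      unfolding E2_def by (rule Qsum)
    have "(\<Sum>i=1..N. real (N choose i) / real i * bp i (-c) * c^(N-i)) = Fs + bpm / real N"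
      using N1 unfolding Fs_def bpm_def by (cases N) (auto simp: sum.cl_ivl_Suc)
    moreover have "harm N = H + 1 / real N"
      using N1 unfolding H_def by (cases N) (auto simp: harm_Suc')
    ultimately show ?thesis using q by simp
  qed
  have ebpm: "bpm = hN + real N * c^(N-1)"
  proof -
    have cc: "-c + 1 = c" by (simp add: c_def)
    have "bp N c = bp N (-c) + real N * (-c)^(N-1)" using bp_diff[of N "-c"] unfolding cc .
    moreover have "(-c)^(N-1) = - (c^(N-1))" using oddN1 by simp
    ultimately show ?thesis unfolding bpm_def hN_def by simp
  qed
  have ecN: "c^N = c * c^(N-1)" using N1 by (cases N) auto
  have RN: "real N \<noteq> 0" using N1 by simp
  have SSeq: "SS N c 0 = (S1 + S2 + H * (bN + hN)) / real N + 2 * hN / (real N)^2"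
    by (rule final_combine[OF RN c_def e_main ePhi0 ePhi2 eT eP3 eIS eF ebpm ecN])
  have gsum: "(\<Sum>i=1..N-1. g i) = (S1 + S2) / 2"
  proof -
    have "(\<Sum>i=1..N-1. g i) = (\<Sum>i=1..N-1. (real (N choose i) / real i * bp i c * bernoulli (N-i)
        + real (N choose i) / real i * bp i c * bp (N-i) c) / 2)"
    proof (rule sum.cong[OF refl])
      fix i assume "i \<in> {1..N-1}"
      then have i: "1 \<le> i" "i \<le> N-1" by auto
      define p :: real where "p = 2^(i-1)"
      define q :: real where "q = 2^(N-i)"
      have p0: "p \<noteq> 0" and q0: "q \<noteq> 0" by (simp_all add: p_def q_def)
      obtain t where t: "i = Suc t" using i by (cases i) auto
      have hp: "(2::real)^i = 2 * p" unfolding p_def t by simp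
      have ee: "N - 1 = (i - 1) + (N - i)" using i N1 by simp
      have hpq: "(2::real)^(N-1) = p * q" unfolding p_def q_def ee power_add by simp
      have hNi: "bp (N-i) c = (2 / q - 1) * bernoulli (N-i)" unfolding c_def q_def by (rule bp_half)
      have hi: "bp i c = (2 / (2 * p) - 1) * bernoulli i" unfolding c_def hp[symmetric] by (rule bp_half)
      show "g i = (real (N choose i) / real i * bp i c * bernoulli (N-i)
        + real (N choose i) / real i * bp i c * bp (N-i) c) / 2"
        unfolding g_def hNi hi hpq p_def[symmetric] using p0 q0 i by (simp add: field_simps)
    qed
    also have "\<dots> = (S1 + S2) / 2" unfolding S1_def S2_def
      by (simp add: sum_divide_distrib[symmetric] sum.distrib)
    finally show ?thesis .
  qed
  have gN: "g N = hN / real N"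
  proof -
    have "(2::real)^(N-1) * 2 = 2^N" using N1 by (metis Suc_diff_le diff_Suc_1 power_Suc2)
    then show ?thesis unfolding g_def hN_def c_def bp_half using N1
      by (simp add: field_simps)
  qed
  have gAll: "(\<Sum>i=1..N. g i) = (S1 + S2) / 2 + hN / real N"
    using N1 gsum gN by (cases N) (auto simp: sum.cl_ivl_Suc)
  have bh: "bN + hN = 2 * bN / 2^N" unfolding bN_def hN_def c_def bp_half by (simp add: field_simps)
  have nN: "real n = real N / 2" by (simp add: N_def)
  show ?thesis
    unfolding LHS RHSsum SSeq gAll
    unfolding N_def[symmetric] H_def[symmetric] bN_def[symmetric] bh nN
    using RN by (simp add: field_simps power2_eq_square)
qed


end
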